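(* Let $t_1,m_1,m_3,m_4\in\mathbb{R}$ with $m_3+im_4\neq 0$. Let $\mathfrak g$ be the real linear span of $E_1=\begin{pmatrix} t_1&2m_3-2im_4&-\frac{i}{2}(t_1m_1+2m_3^2+2m_4^2)&1\\0&0&0&0\\4i&0&2m_1&0\\0&0&0&0\end{pmatrix}$, $E_2=\begin{pmatrix}0&0&0&i\\0&0&0&0\\0&0&0&0\\0&0&0&0\end{pmatrix}$, $E_3=\begin{pmatrix}2m_3&-m_1&0&0\\0&m_3-im_4&0&1\\0&2i&2m_3&0\\0&0&0&0\end{pmatrix}$, $E_4=\begin{pmatrix}2m_4&im_1&0&0\\0&m_4+im_3&0&i\\0&2&2m_4&0\\0&0&0&0\end{pmatrix}$, $E_5=\begin{pmatrix}0&0&0&0\\0&0&0&0\\0&0&0&1\\0&0&0&0\end{pmatrix}$, and let $\mathfrak g^*$ be the real linear span of $E_1^*=\begin{pmatrix} t_1&0&-\frac{i}{2}(t_1m_1+2m_3^2+2m_4^2)&0\\0&0&0&0\\4i&0&2m_1&0\\0&0&0&0\end{pmatrix}$, $E_2^*=\begin{pmatrix}0&0&0&i\\0&0&0&0\\0&0&0&0\\0&0&0&0\end{pmatrix}$, $E_3^*=\mathrm{diag}(2,1,2,0)$, $E_4^*=\mathrm{diag}(0,i,0,0)$, $E_5^*=\begin{pmatrix}0&0&0&0\\0&0&0&0\\0&0&0&1\\0&0&0&0\end{pmatrix}$. Then $\mathfrak g$ and $\mathfrak g^*$ are similar: there is an invertible complex $4\times4$ matrix $C$ with $C^{-1}\mathfrak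 g\,C=\mathfrak g^*$.
   Context: All matrices are complex $4\times 4$; $\mathrm{diag}(a,b,c,d)$ denotes the diagonal matrix with those diagonal entries. *)

theory Defs
  imports "HOL-Analysis.Analysis"
begin

definition mat4 :: "complex list list \<Rightarrow> complex^4^4" where
  "mat4 rs = vector (map vector rs)"

definition E1 :: "real \<Rightarrow> real \<Rightarrow> real \<Rightarrow> real \<Rightarrow> complex^4^4" where
  "E1 t1 m1 m3 m4 = mat4
    [[of_real t1, 2 * of_real m3 - 2 * \<i> * of_real m4,
      - (\<i> / 2) * of_real (t1 * m1 + 2 * m3^2 + 2 * m4^2), 1],
     [0, 0, 0, 0],
     [4 * \<i>, 0, 2 * of_real m1, 0],
     [0, 0, 0, 0]]"

definition E2 :: "complex^4^4" where
  "E2 = mat4 [[0,0,0,\<i>],[0,0,0,0],[0,0,0,0],[0,0,0,0]]"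

definition E3 :: "real \<Rightarrow> real \<Rightarrow> real \<Rightarrow> complex^4^4" where
  "E3 m1 m3 m4 = mat4
    [[2 * of_real m3, - of_real m1, 0, 0],
     [0, of_real m3 - \<i> * of_real m4, 0, 1],
     [0, 2 * \<i>, 2 * of_real m3, 0],
     [0, 0, 0, 0]]"

definition E4 :: "real \<Rightarrow> real \<Rightarrow> real \<Rightarrow> complex^4^4" where
  "E4 m1 m3 m4 = mat4
    [[2 * of_real m4, \<i> * of_real m1, 0, 0],
     [0, of_real m4 + \<i> * of_real m3, 0, \<i>],
     [0, 2, 2 * of_real m4, 0],
     [0, 0, 0, 0]]"

definition E5 :: "complex^4^4" where
  "E5 = mat4 [[0,0,0,0],[0,0,0,0],[0,0,0,1],[0,0,0,0]]"

definition E1s :: "real \<Rightarrow> real \<Rightarrow> real \<Rightarrow> real \<Rightarrow> complex^4^4" where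
  "E1s t1 m1 m3 m4 = mat4
    [[of_real t1, 0, - (\<i> / 2) * of_real (t1 * m1 + 2 * m3^2 + 2 * m4^2), 0],
     [0, 0, 0, 0],
     [4 * \<i>, 0, 2 * of_real m1, 0],
     [0, 0, 0, 0]]"

definition E2s :: "complex^4^4" where
  "E2s = mat4 [[0,0,0,\<i>],[0,0,0,0],[0,0,0,0],[0,0,0,0]]"

definition E3s :: "complex^4^4" where
  "E3s = mat4 [[2,0,0,0],[0,1,0,0],[0,0,2,0],[0,0,0,0]]"

definition E4s :: "complex^4^4" where
  "E4s = mat4 [[0,0,0,0],[0,\<i>,0,0],[0,0,0,0],[0,0,0,0]]"

definition E5s :: "complex^4^4" where
  "E5s = mat4 [[0,0,0,0],[0,0,0,0],[0,0,0,1],[0,0,0,0]]"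

end

theory Submission
  imports Defs
begin

lemma vector4 [simp]:
  "(vector [a,b,c,d] :: 'a::zero^4) $ 1 = a"
  "(vector [a,b,c,d] :: 'a::zero^4) $ 2 = b"
  "(vector [a,b,c,d] :: 'a::zero^4) $ 3 = c"
  "(vector [a,b,c,d] :: 'a::zero^4) $ 4 = d"
  unfolding vector_def by simp_all

lemma mat4_nth [simp]:
  "mat4 [r1,r2,r3,r4] $ 1 = vector r1"
  "mat4 [r1,r2,r3,r4] $ 2 = vector r2"
  "mat4 [r1,r2,r3,r4] $ 3 = vector r3"
  "mat4 [r1,r2,r3,r4] $ 4 = vector r4"
  unfolding mat4_def by simp_all

lemma mm4: fixes A B :: "complex^4^4" shows "(A ** B) $ i $ j = A$i$1 * B$1$j + A$i$2 * B$2$j + A$i$3 * B$3$j + A$i$4 * B$4$j"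
  by (simp add: matrix_matrix_mult_def sum_4)

lemma eq4: "(A :: complex^4^4) = B \<longleftrightarrow> (\<forall>i j. A$i$j = B$i$j)"
  by (simp add: vec_eq_iff)

lemma sc4 [simp]: fixes M :: "complex^4^4" shows "(r *\<^sub>R M) $ i $ j = of_real r * M $ i $ j"
  unfolding vector_scaleR_component by (rule scaleR_conv_of_real)

lemma linear_conj:
  fixes D C :: "complex^4^4"
  shows "linear (\<lambda>X. D ** X ** C)"
proof (rule linearI)
  fix X Y :: "complex^4^4" and r :: real
  show "D ** (X + Y) ** C = D ** X ** C + D ** Y ** C"
    unfolding eq4 by (simp add: mm4 algebra_simps)
  show "D ** (r *\<^sub>R X) ** C = r *\<^sub>R (D ** X ** C)"
    unfolding eq4 by (simp add: mm4  algebra_simps)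
qed

lemma matrix_inv_eq:
  fixes C D :: "complex^4^4"
  assumes "C ** D = mat 1" "D ** C = mat 1"
  shows "invertible C" "matrix_inv C = D"
proof -
  show inv: "invertible C" using assms unfolding invertible_def by blast
  have M: "C ** matrix_inv C = mat 1 \<and> matrix_inv C ** C = mat 1"
    unfolding matrix_inv_def by (rule someI[of _ D]) (use assms in blast)
  have "matrix_inv C = matrix_inv C ** (C ** D)" using assms by (simp add: matrix_mul_rid)
  also have "\<dots> = (matrix_inv C ** C) ** D" by (simp add: matrix_mul_assoc)
  also have "\<dots> = D" using M by (simp add: matrix_mul_lid)
  finally show "matrix_inv C = D" .
qed

theorem proposition4p1:
  fixes t1 m1 m3 m4 :: real
  assumes "Complex m3 m4 \<noteq> 0"
  shows "\<exists>C :: complex^4^4. invertible C \<and>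
    (\<lambda>X. matrix_inv C ** X ** C) `
      span {E1 t1 m1 m3 m4, E2, E3 m1 m3 m4, E4 m1 m3 m4, E5}
    = span {E1s t1 m1 m3 m4, E2s, E3s, E4s, E5s}"
proof -
  define n where "n = m3^2 + m4^2"
  have n: "n \<noteq> 0" using assms unfolding n_def
    by (metis complex_eq_cancel_iff2 power2_eq_square sum_squares_eq_zero_iff zero_complex.code)
  define nc where "nc = complex_of_real n"
  have nc: "nc \<noteq> 0" using n unfolding nc_def of_real_eq_0_iff .
  have ncx: "nc = of_real m3 * of_real m3 + of_real m4 * of_real m4"
    unfolding nc_def n_def by (simp add: power2_eq_square)
  have nc': "(of_real m3 * of_real m3 + of_real m4 * of_real m4 :: complex) \<noteq> 0" using nc ncx by simp
  have nsq: "m3*m3+m4*m4 \<noteq> 0" using n unfolding n_def by (simp add: power2_eq_square)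
  define a where "a = of_real m1 * (of_real m3 - \<i> * of_real m4) / nc"
  define b where "b = -2 * \<i> * (of_real m3 - \<i> * of_real m4) / nc"
  define c where "c = - (of_real m3 + \<i> * of_real m4) / nc"
  define p where "p = - of_real m1 / (2 * nc)"
  define q where "q = \<i> / nc"
  define C :: "complex^4^4" where "C = mat4 [[1,a,0,p],[0,1,0,c],[0,b,1,q],[0,0,0,1]]"
  define D :: "complex^4^4" where "D = mat4 [[1,-a,0,-p+a*c],[0,1,0,-c],[0,-b,1,-q+b*c],[0,0,0,1]]"
  define I3 where "I3 = m3 *\<^sub>R E3s - m4 *\<^sub>R E4s + (m4*m1/n) *\<^sub>R E2s + (2*m4/n) *\<^sub>R E5s"
  define I4 where "I4 = m4 *\<^sub>R E3s + m3 *\<^sub>R E4s - (m3*m1/n) *\<^sub>R E2s - (2*m3/n) *\<^sub>R E5s"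
  have CD: "C ** D = mat 1" "D ** C = mat 1"
    unfolding eq4 mm4 forall_4 C_def D_def by (simp_all add: mat_def)
  note inv = matrix_inv_eq[OF CD]
  have h1: "C ** E1s t1 m1 m3 m4 = E1 t1 m1 m3 m4 ** C"
    unfolding eq4 mm4 forall_4 C_def E1_def E1s_def
    using nc by (simp add: a_def b_def c_def p_def q_def field_simps; simp add: ncx algebra_simps power2_eq_square)
  have h2: "C ** E2s = E2 ** C"
    unfolding eq4 mm4 forall_4 C_def E2_def E2s_def by simp
  have h5: "C ** E5s = E5 ** C"
    unfolding eq4 mm4 forall_4 C_def E5_def E5s_def by simp
  have h3: "C ** I3 = E3 m1 m3 m4 ** C"
    unfolding eq4 mm4 forall_4 C_def E3_def I3_def E2s_def E3s_def E4s_def E5s_def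
    using nc by (simp add: a_def b_def c_def p_def q_def  field_simps; simp add: scaleR_conv_of_real nc_def[symmetric] field_simps; simp add: ncx algebra_simps power2_eq_square)
  have h4: "C ** I4 = E4 m1 m3 m4 ** C"
    unfolding eq4 mm4 forall_4 C_def E4_def I4_def E2s_def E3s_def E4s_def E5s_def
    using nc by (simp add: a_def b_def c_def p_def q_def  field_simps; simp add: scaleR_conv_of_real nc_def[symmetric] field_simps; simp add: ncx algebra_simps power2_eq_square)
  have conj: "D ** X ** C = Y" if "C ** Y = X ** C" for X Y
  proof -
    have "D ** X ** C = D ** (X ** C)" by (simp add: matrix_mul_assoc)
    also have "\<dots> = D ** (C ** Y)" using that by simp
    also have "\<dots> = (D ** C) ** Y" by (simp add: matrix_mul_assoc)
    finally show ?thesis using CD by (simp add: matrix_mul_lid)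
  qed
  have img: "(\<lambda>X. D ** X ** C) ` {E1 t1 m1 m3 m4, E2, E3 m1 m3 m4, E4 m1 m3 m4, E5}
      = {E1s t1 m1 m3 m4, E2s, I3, I4, E5s}"
    using conj[OF h1] conj[OF h2] conj[OF h3] conj[OF h4] conj[OF h5] by simp
  have e3: "E3s = (1/n) *\<^sub>R (m3 *\<^sub>R I3 + m4 *\<^sub>R I4)"
    unfolding eq4 forall_4 I3_def I4_def E2s_def E3s_def E4s_def E5s_def
    using n nc' by (simp add: field_simps; simp add: n_def power2_eq_square; simp add: scaleR_add_left[symmetric] add_divide_distrib[symmetric] nsq scaleR_conv_of_real; simp add: field_simps)
  have e4': "n *\<^sub>R E4s = - m4 *\<^sub>R I3 + m3 *\<^sub>R I4 + m1 *\<^sub>R E2s + 2 *\<^sub>R E5s"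
    unfolding eq4 forall_4 I3_def I4_def E2s_def E3s_def E4s_def E5s_def
    using nc unfolding nc_def by (simp; simp add: scaleR_conv_of_real field_simps; simp add: n_def power2_eq_square algebra_simps)
  have e4: "E4s = (1/n) *\<^sub>R (- m4 *\<^sub>R I3 + m3 *\<^sub>R I4 + m1 *\<^sub>R E2s + 2 *\<^sub>R E5s)"
    unfolding e4'[symmetric] using n by simp
  have "span {E1s t1 m1 m3 m4, E2s, I3, I4, E5s} = span {E1s t1 m1 m3 m4, E2s, E3s, E4s, E5s}"
  proof (rule span_eq[THEN iffD2], rule conjI)
    show "{E1s t1 m1 m3 m4, E2s, I3, I4, E5s} \<subseteq> span {E1s t1 m1 m3 m4, E2s, E3s, E4s, E5s}"
    proof -
      have "I3 \<in> span {E1s t1 m1 m3 m4, E2s, E3s, E4s, E5s}" unfolding I3_def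
        by (intro span_add span_diff span_scale; rule span_base; simp)
      moreover have "I4 \<in> span {E1s t1 m1 m3 m4, E2s, E3s, E4s, E5s}" unfolding I4_def
        by (intro span_add span_diff span_scale; rule span_base; simp)
      ultimately show ?thesis by (simp add: span_base)
    qed
    show "{E1s t1 m1 m3 m4, E2s, E3s, E4s, E5s} \<subseteq> span {E1s t1 m1 m3 m4, E2s, I3, I4, E5s}"
    proof -
      have "E3s \<in> span {E1s t1 m1 m3 m4, E2s, I3, I4, E5s}" unfolding e3
        by (intro span_add span_diff span_scale; rule span_base; simp)
      moreover have "E4s \<in> span {E1s t1 m1 m3 m4, E2s, I3, I4, E5s}" unfolding e4
        by (intro span_add span_diff span_scale; rule span_base; simp)
      ultimately show ?thesis by (simp add: span_base)
    qed
  qed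
  moreover have "(\<lambda>X. D ** X ** C) ` span {E1 t1 m1 m3 m4, E2, E3 m1 m3 m4, E4 m1 m3 m4, E5}
      = span ((\<lambda>X. D ** X ** C) ` {E1 t1 m1 m3 m4, E2, E3 m1 m3 m4, E4 m1 m3 m4, E5})"
    by (rule span_linear_image[symmetric, OF linear_conj])
  ultimately show ?thesis
    using inv img by (intro exI[of _ C]) simp
qed
end
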